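(* Let $m\ge1$ and $\mathfrak{g}_m=\mathfrak{sl}(2)\ltimes V(m)$. Let $V$ and $W$ be uniserial $\mathfrak{g}_m$-modules with socle decompositions $V=V(a_0)\oplus\cdots\oplus V(a_\ell)$ and $W=V(b_0)\oplus\cdots\oplus V(b_{\ell'})$, where $\ell,\ell'\ge1$. Let $v_0\in V(a_{i_0})\otimes V(b_{j_0})\subset V\otimes W$ be a highest weight vector (for $\mathfrak{sl}(2)$). For $s=0,\dots,m$ let $(e_sv_0)_1$ denote the component of $e_sv_0$ in $V(a_{i_0-1})\otimes V(b_{j_0})$ and $(e_sv_0)_2$ its component in $V(a_{i_0})\otimes V(b_{j_0-1})$ (with respect to the decomposition $V\otimes W=\bigoplus_{i,j}V(a_i)\otimes V(b_j)$; these components are $0$ when $i_0=0$, resp. $j_0=0$). Then: (i) $(e_sv_0)_1=0$ for all $s=0,\dots,m$ if and only if $i_0=0$; (ii) $(e_sv_0)_2=0$ for all $s=0,\dots,m$ if and only if $j_0=0$.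
   Context: $\mathbb{F}$ is a field of characteristic zero; all modules are finite dimensional. $\{e,h,f\}$ is the standard basis of $\mathfrak{sl}(2)$ and $V(a)$ denotes the irreducible $\mathfrak{sl}(2)$-module of highest weight $a\ge0$ (dimension $a+1$). $\mathfrak{g}_m=\mathfrak{sl}(2)\ltimes V(m)$ where $\mathfrak{r}=V(m)$ is an abelian ideal on which $\mathfrak{sl}(2)$ acts as on $V(m)$; $\{e_0,\dots,e_m\}$ is a basis of $\mathfrak{r}=V(m)$ consisting of $h$-weight vectors ($e_s$ of weight $m-2s$). A module is uniserial if it has a unique composition series, i.e. its socle series $0=\mathrm{soc}^0\subset\mathrm{soc}^1\subset\cdots\subset\mathrm{soc}^n=V$ has irreducible factors. A socle decomposition of a uniserial $\mathfrak{g}_m$-module $V$ of composition length $\ell+1$ is a decomposition $V=V(a_0)\oplus\cdots\oplus V(a_\ell)$ into irreducible $\mathfrak{sl}(2)$-submodules such that $\mathrm{soc}^{k}(V)=V(a_0)\oplus\cdots\oplus V(a_{k-1})$ for all $k$ (so $V(a_{k})\cong\mathrm{soc}^{k+1}(V)/\mathrm{soc}^{k}(V)$ and $\mathfrak{r}V(a_k)\subset V(a_0)\oplus\cdots\oplus V(a_{k-1})$). A highest weight vector is a nonzero $h$-eigenvector annihilated by $e$. *)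

theory Defs
  imports "HOL-Analysis.Analysis"
begin

text \<open>A representation of g_m = sl(2) semidirect V(m) on the coordinate space 'a^'n:
  matrices for e, h, f and for the basis vectors e_0, ..., e_m of the abelian ideal r = V(m).\<close>
record ('a, 'n) gmrep =
  eop :: "'a^'n^'n"
  hop :: "'a^'n^'n"
  fop :: "'a^'n^'n"
  rop :: "nat \<Rightarrow> 'a^'n^'n"

definition bracket :: "'a::field^'n^'n \<Rightarrow> 'a^'n^'n \<Rightarrow> 'a^'n^'n" where
  "bracket A B = A ** B - B ** A"

definition msc :: "'a::field \<Rightarrow> 'a^'n^'n \<Rightarrow> 'a^'n^'n" where
  "msc c A = (\<chi> i j. c * A $ i $ j)"

definition gm_module :: "nat \<Rightarrow> ('a::field_char_0, 'n::finite) gmrep \<Rightarrow> bool" where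
  "gm_module m \<rho> \<longleftrightarrow>
     bracket (hop \<rho>) (eop \<rho>) = msc 2 (eop \<rho>) \<and>
     bracket (hop \<rho>) (fop \<rho>) = msc (-2) (fop \<rho>) \<and>
     bracket (eop \<rho>) (fop \<rho>) = hop \<rho> \<and>
     (\<forall>s t. s \<le> m \<longrightarrow> t \<le> m \<longrightarrow> bracket (rop \<rho> s) (rop \<rho> t) = 0) \<and>
     (\<forall>s\<le>m. bracket (hop \<rho>) (rop \<rho> s) = msc (of_int (int m - 2 * int s)) (rop \<rho> s)) \<and>
     (\<forall>s\<le>m. bracket (eop \<rho>) (rop \<rho> s) =
               (if s = 0 then 0 else msc (of_nat (s * (m + 1 - s))) (rop \<rho> (s - 1)))) \<and>
     (\<forall>s\<le>m. bracket (fop \<rho>) (rop \<rho> s) = (if s = m then 0 else rop \<rho> (s + 1)))"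

definition sl2_submodule :: "('a::field, 'n::finite) gmrep \<Rightarrow> ('a^'n) set \<Rightarrow> bool" where
  "sl2_submodule \<rho> U \<longleftrightarrow> vec.subspace U \<and>
     (\<forall>x\<in>U. eop \<rho> *v x \<in> U \<and> hop \<rho> *v x \<in> U \<and> fop \<rho> *v x \<in> U)"

definition gm_submodule :: "nat \<Rightarrow> ('a::field, 'n::finite) gmrep \<Rightarrow> ('a^'n) set \<Rightarrow> bool" where
  "gm_submodule m \<rho> U \<longleftrightarrow> sl2_submodule \<rho> U \<and> (\<forall>x\<in>U. \<forall>s\<le>m. rop \<rho> s *v x \<in> U)"

text \<open>Irreducible sl(2)-submodule (then it is isomorphic to V(a) with a+1 its dimension).\<close>
definition sl2_irred :: "('a::field, 'n::finite) gmrep \<Rightarrow> ('a^'n) set \<Rightarrow> bool" where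
  "sl2_irred \<rho> U \<longleftrightarrow> sl2_submodule \<rho> U \<and> U \<noteq> {0} \<and>
     (\<forall>U'. sl2_submodule \<rho> U' \<and> U' \<subseteq> U \<longrightarrow> U' = {0} \<or> U' = U)"

definition simple_quot :: "nat \<Rightarrow> ('a::field, 'n::finite) gmrep \<Rightarrow> ('a^'n) set \<Rightarrow> ('a^'n) set \<Rightarrow> bool" where
  "simple_quot m \<rho> S M \<longleftrightarrow> gm_submodule m \<rho> S \<and> gm_submodule m \<rho> M \<and> S \<subset> M \<and>
     (\<forall>N. gm_submodule m \<rho> N \<and> S \<subseteq> N \<and> N \<subseteq> M \<longrightarrow> N = S \<or> N = M)"

text \<open>Socle series: soc^0 = 0, soc^(k+1) = preimage of the socle of V/soc^k, i.e. the sum of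
  soc^k and all submodules M with M/soc^k irreducible.\<close>
fun soc :: "nat \<Rightarrow> ('a::field, 'n::finite) gmrep \<Rightarrow> nat \<Rightarrow> ('a^'n) set" where
  "soc m \<rho> 0 = {0}"
| "soc m \<rho> (Suc k) = vec.span (soc m \<rho> k \<union> \<Union>{M. simple_quot m \<rho> (soc m \<rho> k) M})"

definition uniserial :: "nat \<Rightarrow> ('a::field, 'n::finite) gmrep \<Rightarrow> bool" where
  "uniserial m \<rho> \<longleftrightarrow>
     (\<forall>k. soc m \<rho> k \<noteq> UNIV \<longrightarrow> simple_quot m \<rho> (soc m \<rho> k) (soc m \<rho> (Suc k)))"

definition socle_decomp ::
  "nat \<Rightarrow> ('a::field, 'n::finite) gmrep \<Rightarrow> nat \<Rightarrow> (nat \<Rightarrow> ('a^'n) set) \<Rightarrow> bool" where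
  "socle_decomp m \<rho> l U \<longleftrightarrow>
     (\<forall>k\<le>l. sl2_irred \<rho> (U k)) \<and>
     (\<forall>x. \<exists>us. (\<forall>k\<le>l. us k \<in> U k) \<and> (\<Sum>k\<le>l. us k) = x) \<and>
     (\<forall>us. (\<forall>k\<le>l. us k \<in> U k) \<and> (\<Sum>k\<le>l. us k) = 0 \<longrightarrow> (\<forall>k\<le>l. us k = 0)) \<and>
     (\<forall>k\<le>l + 1. soc m \<rho> k = vec.span (\<Union>i<k. U i))"

text \<open>Tensor products: V \<otimes> W is modelled as 'a^('n \<times> 'k) (basis e_i \<otimes> f_j).\<close>
definition tens :: "'a::field^'n \<Rightarrow> 'a^'k \<Rightarrow> 'a^('n \<times> 'k)" where
  "tens u w = (\<chi> p. u $ fst p * w $ snd p)"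

definition tsub :: "('a::field^'n) set \<Rightarrow> ('a^'k) set \<Rightarrow> ('a^('n \<times> 'k)) set" where
  "tsub U U' = vec.span {tens u w | u w. u \<in> U \<and> w \<in> U'}"

text \<open>Action of x on V \<otimes> W: A \<otimes> 1 + 1 \<otimes> B (Kronecker sum).\<close>
definition tact :: "'a::field^'n^'n \<Rightarrow> 'a^'k^'k \<Rightarrow> 'a^('n \<times> 'k)^('n \<times> 'k)" where
  "tact A B = (\<chi> p q. A $ fst p $ fst q * (if snd p = snd q then 1 else 0)
                     + (if fst p = fst q then 1 else 0) * B $ snd p $ snd q)"

definition component :: "'i set \<Rightarrow> ('i \<Rightarrow> 'v::comm_monoid_add set) \<Rightarrow> 'v \<Rightarrow> 'i \<Rightarrow> 'v" where
  "component I Ts x i = (THE y. \<exists>ys. (\<forall>j\<in>I. ys j \<in> Ts j) \<and> sum ys I = x \<and> ys i = y)"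

end

theory Submission
  imports Defs
begin

locale dsum =
  fixes l :: nat and U :: "nat \<Rightarrow> ('a::field^'n::finite) set"
  assumes sub: "\<And>k. k \<le> l \<Longrightarrow> vec.subspace (U k)"
    and ex: "\<And>x. \<exists>us. (\<forall>k\<le>l. us k \<in> U k) \<and> (\<Sum>k\<le>l. us k) = x"
    and uq: "\<And>us. (\<forall>k\<le>l. us k \<in> U k) \<Longrightarrow> (\<Sum>k\<le>l. us k) = 0 \<Longrightarrow> \<forall>k\<le>l. us k = 0"
begin

definition dec where "dec x = (SOME us. (\<forall>k\<le>l. us k \<in> U k) \<and> (\<Sum>k\<le>l. us k) = x)"

lemma dec: "\<forall>k\<le>l. dec x k \<in> U k" "(\<Sum>k\<le>l. dec x k) = x"
proof -
  have "(\<forall>k\<le>l. dec x k \<in> U k) \<and> (\<Sum>k\<le>l. dec x k) = x"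
    unfolding dec_def by (rule someI_ex[where P="\<lambda>us. (\<forall>k\<le>l. us k \<in> U k) \<and> (\<Sum>k\<le>l. us k) = x"]) (rule ex)
  thus "\<forall>k\<le>l. dec x k \<in> U k" "(\<Sum>k\<le>l. dec x k) = x" by auto
qed

lemma dec_unique:
  assumes "\<forall>k\<le>l. us k \<in> U k" "(\<Sum>k\<le>l. us k) = x" "k \<le> l"
  shows "dec x k = us k"
proof -
  have "\<forall>k\<le>l. us k - dec x k \<in> U k"
    using assms(1) dec(1) sub by (simp add: vec.subspace_diff)
  moreover have "(\<Sum>k\<le>l. us k - dec x k) = 0"
    using assms(2) dec(2)[of x] by (simp add: sum_subtractf)
  ultimately have "\<forall>k\<le>l. us k - dec x k = 0" by (rule uq)
  thus ?thesis using assms(3) by auto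
qed

lemma dec_linear: "i \<le> l \<Longrightarrow> Vector_Spaces.linear (*s) (*s) (\<lambda>x. dec x i)"
proof -
  assume i: "i \<le> l"
  have add: "dec (x + y) i = dec x i + dec y i" for x y
    apply (rule dec_unique[OF _ _ i])
    using dec sub by (auto simp: vec.subspace_add sum.distrib)
  have sc: "dec (c *s x) i = c *s dec x i" for c x
    apply (rule dec_unique[OF _ _ i])
    using dec sub by (auto simp: vec.subspace_scale vec.scale_sum_right[symmetric])
  show ?thesis
    unfolding Vector_Spaces.linear_iff
    using add sc vec.vector_space_axioms by auto
qed

definition P :: "nat \<Rightarrow> 'a^'n^'n" where "P i = matrix (\<lambda>x. dec x i)"

lemma P_apply: "i \<le> l \<Longrightarrow> P i *v x = dec x i"
  unfolding P_def by (rule matrix_works[OF dec_linear])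

lemma P_in: "i \<le> l \<Longrightarrow> P i *v x \<in> U i"
  using P_apply dec by auto

lemma P_sum: "(\<Sum>k\<le>l. P k *v x) = x"
  using P_apply dec by simp

lemma P_unique:
  assumes "\<forall>k\<le>l. us k \<in> U k" "(\<Sum>k\<le>l. us k) = x" "k \<le> l"
  shows "P k *v x = us k"
  using dec_unique[OF assms] P_apply assms(3) by simp

lemma P_U:
  assumes "i \<le> l" "j \<le> l" "x \<in> U j"
  shows "P i *v x = (if i = j then x else 0)"
proof -
  have "P i *v x = (\<lambda>k. if k = j then x else 0) i"
    apply (rule P_unique[OF _ _ assms(1)])
    using assms sub vec.subspace_0 by (auto simp: if_distrib)
  thus ?thesis by simp
qed

lemma mat_sum_apply: "finite S \<Longrightarrow> (sum A S) *v x = (\<Sum>k\<in>S. A k *v x)"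
  by (induction rule: finite_induct) (auto simp: matrix_vector_mult_add_rdistrib)

lemma P_sum_mat: "(\<Sum>k\<le>l. P k) = mat 1"
  by (simp add: matrix_eq mat_sum_apply P_sum)

lemma P_comm:
  assumes i: "i \<le> l" and A: "\<forall>k\<le>l. \<forall>x\<in>U k. A *v x \<in> U k"
  shows "P i ** A = A ** P i"
proof -
  have "P i *v (A *v x) = A *v (P i *v x)" for x
  proof -
    have "A *v x = (\<Sum>k\<le>l. A *v (P k *v x))"
      using P_sum[of x] vec.sum by metis
    thus ?thesis
      by (subst P_unique[OF _ _ i, where us = "\<lambda>k. A *v (P k *v x)"]) (auto simp: A P_in)
  qed
  thus ?thesis by (simp add: matrix_eq matrix_vector_mul_assoc)
qed

lemma span_char:
  assumes "k \<le> l + 1"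
  shows "vec.span (\<Union>i<k. U i) = {x. \<forall>j. k \<le> j \<and> j \<le> l \<longrightarrow> P j *v x = 0}"
proof
  have "vec.subspace {x. \<forall>j. k \<le> j \<and> j \<le> l \<longrightarrow> P j *v x = 0}"
    by (auto simp: vec.subspace_def vec.add vec.scale)
  moreover have "(\<Union>i<k. U i) \<subseteq> {x. \<forall>j. k \<le> j \<and> j \<le> l \<longrightarrow> P j *v x = 0}"
  proof (intro subsetI CollectI allI impI)
    fix x j assume "x \<in> (\<Union>i<k. U i)" "k \<le> j \<and> j \<le> l"
    then obtain i where "i < k" "x \<in> U i" by auto
    then show "P j *v x = 0" using P_U[of j i x] assms \<open>k \<le> j \<and> j \<le> l\<close> by auto
  qed
  ultimately show "vec.span (\<Union>i<k. U i) \<subseteq> {x. \<forall>j. k \<le> j \<and> j \<le> l \<longrightarrow> P j *v x = 0}"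
    by (rule vec.span_minimal[rotated])
next
  show "{x. \<forall>j. k \<le> j \<and> j \<le> l \<longrightarrow> P j *v x = 0} \<subseteq> vec.span (\<Union>i<k. U i)"
  proof
    fix x assume x: "x \<in> {x. \<forall>j. k \<le> j \<and> j \<le> l \<longrightarrow> P j *v x = 0}"
    have "x = (\<Sum>j\<le>l. P j *v x)" using P_sum by simp
    also have "\<dots> = (\<Sum>j\<in>{..l} \<inter> {..<k}. P j *v x)"
      using x by (intro sum.mono_neutral_right) (auto simp: not_less)
    also have "\<dots> \<in> vec.span (\<Union>i<k. U i)"
      by (intro vec.span_sum vec.span_base) (use P_in in auto)
    finally show "x \<in> vec.span (\<Union>i<k. U i)" .
  qed
qed

end

definition kron :: "'a::field^'n::finite^'n \<Rightarrow> 'a^'k::finite^'k \<Rightarrow> 'a^('n \<times> 'k)^('n \<times> 'k)" where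
  "kron A B = (\<chi> p q. A $ fst p $ fst q * B $ snd p $ snd q)"

lemma sum_UNIV_prod: "(\<Sum>q\<in>(UNIV::('n::finite\<times>'k::finite) set). g q) = (\<Sum>a\<in>UNIV. \<Sum>b\<in>UNIV. g (a, b))"
  by (simp add: UNIV_Times_UNIV[symmetric] sum.cartesian_product del: UNIV_Times_UNIV)

lemma kron_tens: "kron A B *v tens u w = tens (A *v u) (B *v w)"
proof -
  have "(\<Sum>a'\<in>UNIV. \<Sum>b'\<in>UNIV. A $ a $ a' * B $ b $ b' * (u $ a' * w $ b')) =
        (\<Sum>a'\<in>UNIV. A $ a $ a' * u $ a') * (\<Sum>b'\<in>UNIV. B $ b $ b' * w $ b')" for a b
    by (simp add: sum_product) (simp add: algebra_simps)
  thus ?thesis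
    by (simp add: vec_eq_iff kron_def tens_def matrix_vector_mult_def sum_UNIV_prod)
qed

lemma kron_mult: "kron A B ** kron C D = kron (A ** C) (B ** D)"
proof -
  have "(\<Sum>a'\<in>UNIV. \<Sum>b'\<in>UNIV. A $ a $ a' * B $ b $ b' * (C $ a' $ c * D $ b' $ d)) =
        (\<Sum>a'\<in>UNIV. A $ a $ a' * C $ a' $ c) * (\<Sum>b'\<in>UNIV. B $ b $ b' * D $ b' $ d)" for a b c d
    by (simp add: sum_product) (simp add: algebra_simps)
  thus ?thesis
    by (simp add: vec_eq_iff kron_def matrix_matrix_mult_def sum_UNIV_prod)
qed

lemma tact_kron: "tact A B = kron A (mat 1) + kron (mat 1) B"
  by (simp add: vec_eq_iff kron_def tact_def mat_def)

lemma kron_one: "kron (mat 1) (mat 1) = (mat 1 :: 'a::field^('n::finite \<times> 'k::finite)^('n \<times> 'k))"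
  by (auto simp: vec_eq_iff kron_def mat_def prod_eq_iff)

lemma kron_sum_left: "kron (sum f S) B = (\<Sum>i\<in>S. kron (f i) B)"
  by (induction S rule: infinite_finite_induct)
     (auto simp: vec_eq_iff kron_def distrib_right)

lemma kron_sum_right: "kron A (sum f S) = (\<Sum>i\<in>S. kron A (f i))"
  by (induction S rule: infinite_finite_induct)
     (auto simp: vec_eq_iff kron_def distrib_left)

lemma tens_0 [simp]: "tens 0 w = 0" "tens u 0 = 0"
  by (auto simp: tens_def vec_eq_iff)

lemma tact_tens: "tact A B *v tens u w = tens (A *v u) w + tens u (B *v w)"
  by (simp add: tact_kron matrix_vector_mult_add_rdistrib kron_tens)

lemma tens_in: "u \<in> S \<Longrightarrow> w \<in> T \<Longrightarrow> tens u w \<in> tsub S T"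
  unfolding tsub_def by (intro vec.span_base) auto

lemma tsub_eq:
  assumes "z \<in> tsub S T" "\<And>u w. u \<in> S \<Longrightarrow> w \<in> T \<Longrightarrow> M *v tens u w = N *v tens u w"
  shows "M *v z = N *v z"
proof -
  have "vec.subspace {z. M *v z = N *v z}"
    by (auto simp: vec.subspace_def vec.add vec.scale)
  moreover have "{tens u w | u w. u \<in> S \<and> w \<in> T} \<subseteq> {z. M *v z = N *v z}"
    using assms(2) by auto
  ultimately have "tsub S T \<subseteq> {z. M *v z = N *v z}"
    unfolding tsub_def by (rule vec.span_minimal[rotated])
  thus ?thesis using assms(1) by auto
qed

lemma tsub_into:
  assumes "z \<in> tsub S T" "\<And>u w. u \<in> S \<Longrightarrow> w \<in> T \<Longrightarrow> M *v tens u w \<in> tsub S' T'"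
  shows "M *v z \<in> tsub S' T'"
proof -
  have "vec.subspace {z. M *v z \<in> tsub S' T'}"
    unfolding tsub_def
    by (auto simp: vec.subspace_def vec.add vec.scale vec.span_add vec.span_scale vec.span_zero)
  moreover have "{tens u w | u w. u \<in> S \<and> w \<in> T} \<subseteq> {z. M *v z \<in> tsub S' T'}"
    using assms(2) by auto
  ultimately have "tsub S T \<subseteq> {z. M *v z \<in> tsub S' T'}"
    unfolding tsub_def by (rule vec.span_minimal[rotated])
  thus ?thesis using assms(1) by auto
qed

definition slice1 :: "'k::finite \<Rightarrow> 'a^('n::finite \<times> 'k) \<Rightarrow> 'a^'n" where "slice1 b z = (\<chi> a. z $ (a, b))"
definition slice2 :: "'n::finite \<Rightarrow> 'a^('n \<times> 'k::finite) \<Rightarrow> 'a^'k" where "slice2 a z = (\<chi> b. z $ (a, b))"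

lemma slice1_kron: "slice1 b (kron A (mat 1) *v z) = A *v slice1 b (z::'a::field^('n::finite\<times>'k::finite))"
proof -
  have "(\<Sum>a'\<in>UNIV. \<Sum>b'\<in>UNIV. A $ a $ a' * (if b = b' then 1 else 0) * z $ (a', b')) =
        (\<Sum>a'\<in>UNIV. A $ a $ a' * z $ (a', b))" for a
    by (intro sum.cong refl) (simp add: if_distrib if_distribR cong: if_cong)
  thus ?thesis
    by (simp add: vec_eq_iff slice1_def kron_def mat_def matrix_vector_mult_def sum_UNIV_prod)
qed

lemma slice2_kron: "slice2 a (kron (mat 1) B *v z) = B *v slice2 a (z::'a::field^('n::finite\<times>'k::finite))"
proof -
  have "(\<Sum>a'\<in>UNIV. \<Sum>b'\<in>UNIV. (if a = a' then 1 else 0) * B $ b $ b' * z $ (a', b')) =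
        (\<Sum>b'\<in>UNIV. B $ b $ b' * z $ (a, b'))" for b
    by (subst sum.swap) (simp add: if_distrib if_distribR cong: if_cong)
  thus ?thesis
    by (simp add: vec_eq_iff slice2_def kron_def mat_def matrix_vector_mult_def sum_UNIV_prod)
qed

lemma slice_lin [simp]:
  "slice1 b (x + y) = slice1 b x + slice1 b y" "slice1 b (c *s x) = c *s slice1 b x" "slice1 b 0 = 0"
  "slice2 a (x + y) = slice2 a x + slice2 a y" "slice2 a (c *s x) = c *s slice2 a x" "slice2 a 0 = 0"
  by (auto simp: vec_eq_iff slice1_def slice2_def)

lemma slice1_in:
  assumes "z \<in> tsub S T" "vec.subspace S"
  shows "slice1 b z \<in> S"
proof -
  have "vec.subspace {z. slice1 b z \<in> S}"
    using assms(2) by (auto simp: vec.subspace_def)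
  moreover have "{tens u w | u w. u \<in> S \<and> w \<in> T} \<subseteq> {z. slice1 b z \<in> S}"
  proof safe
    fix u w assume "u \<in> S" "w \<in> T"
    have "slice1 b (tens u w) = (w $ b) *s u" by (simp add: vec_eq_iff slice1_def tens_def mult_ac)
    thus "slice1 b (tens u w) \<in> S" using \<open>u \<in> S\<close> assms(2) by (simp add: vec.subspace_scale)
  qed
  ultimately have "tsub S T \<subseteq> {z. slice1 b z \<in> S}"
    unfolding tsub_def by (rule vec.span_minimal[rotated])
  thus ?thesis using assms(1) by auto
qed

lemma slice2_in:
  assumes "z \<in> tsub S T" "vec.subspace T"
  shows "slice2 a z \<in> T"
proof -
  have "vec.subspace {z. slice2 a z \<in> T}"
    using assms(2) by (auto simp: vec.subspace_def)
  moreover have "{tens u w | u w. u \<in> S \<and> w \<in> T} \<subseteq> {z. slice2 a z \<in> T}"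
  proof safe
    fix u w assume "u \<in> S" "w \<in> T"
    have "slice2 a (tens u w) = (u $ a) *s w" by (simp add: vec_eq_iff slice2_def tens_def mult_ac)
    thus "slice2 a (tens u w) \<in> T" using \<open>w \<in> T\<close> assms(2) by (simp add: vec.subspace_scale)
  qed
  ultimately have "tsub S T \<subseteq> {z. slice2 a z \<in> T}"
    unfolding tsub_def by (rule vec.span_minimal[rotated])
  thus ?thesis using assms(1) by auto
qed

lemma slice1_nz: "z \<noteq> 0 \<Longrightarrow> \<exists>b. slice1 b z \<noteq> 0"
  by (auto simp: vec_eq_iff slice1_def)

lemma slice2_nz: "z \<noteq> 0 \<Longrightarrow> \<exists>a. slice2 a z \<noteq> 0"
  by (auto simp: vec_eq_iff slice2_def)

lemma tens_axis: "tens (axis a 1) (axis b 1) = (axis (a, b) 1 :: 'a::field^('n::finite \<times> 'k::finite))"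
  by (auto simp: vec_eq_iff tens_def axis_def)

lemma tsub_UNIV: "(z::'a::field^('n::finite \<times> 'k::finite)) \<in> tsub UNIV UNIV"
proof -
  have "z = (\<Sum>q\<in>UNIV. (z $ q) *s tens (axis (fst q) 1) (axis (snd q) 1))"
    by (simp add: tens_axis basis_expansion)
  also have "\<dots> \<in> tsub UNIV UNIV"
    unfolding tsub_def by (intro vec.span_sum vec.span_scale vec.span_base) auto
  finally show ?thesis .
qed

lemma component_kron:
  assumes dU: "dsum l U" and dU': "dsum l' U'" and ij: "i \<le> l" "j \<le> l'"
  shows "component ({..l} \<times> {..l'}) (\<lambda>(i, j). tsub (U i) (U' j)) z (i, j)
       = kron (dsum.P l U i) (dsum.P l' U' j) *v z"
proof -
  interpret V: dsum l U by (rule dU)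
  interpret W: dsum l' U' by (rule dU')
  define I where "I = {..l} \<times> {..l'}"
  define Ts where "Ts = (\<lambda>(i, j). tsub (U i) (U' j))"
  define K where "K p = kron (V.P (fst p)) (W.P (snd p))" for p
  have proj: "K p *v y = (if p = q then y else 0)" if "p \<in> I" "q \<in> I" "y \<in> Ts q" for p q y
  proof -
    obtain a b c d where pq: "p = (a, b)" "q = (c, d)" by fastforce
    have y: "y \<in> tsub (U c) (U' d)" using that pq Ts_def by auto
    have "K p *v y = (if p = q then mat 1 else 0) *v y"
    proof (rule tsub_eq[OF y])
      fix u w assume u: "u \<in> U c" and w: "w \<in> U' d"
      show "K p *v tens u w = (if p = q then mat 1 else 0) *v tens u w"
        using that pq u w V.P_U W.P_U unfolding I_def
        by (auto simp: K_def kron_tens)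
    qed
    thus ?thesis by simp
  qed
  have sumK: "(\<Sum>p\<in>I. K p) = mat 1"
  proof -
    have "(\<Sum>p\<in>I. K p) = (\<Sum>a\<le>l. \<Sum>b\<le>l'. K (a, b))"
      by (simp add: I_def sum.cartesian_product)
    also have "\<dots> = kron (\<Sum>a\<le>l. V.P a) (\<Sum>b\<le>l'. W.P b)"
      unfolding kron_sum_left kron_sum_right K_def by (subst sum.swap) simp
    finally have "(\<Sum>p\<in>I. K p) = kron (\<Sum>a\<le>l. V.P a) (\<Sum>b\<le>l'. W.P b)" .
    thus ?thesis by (simp add: V.P_sum_mat W.P_sum_mat kron_one)
  qed
  have inT: "K p *v z \<in> Ts p" if "p \<in> I" for p
  proof -
    obtain a b where p: "p = (a, b)" by fastforce
    have "K p *v z \<in> tsub (U a) (U' b)"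
    proof (rule tsub_into[OF tsub_UNIV])
      fix u w :: "'a^_"
      show "K p *v tens u w \<in> tsub (U a) (U' b)"
        using that p V.P_in W.P_in unfolding I_def by (auto simp: K_def kron_tens intro!: tens_in)
    qed
    thus ?thesis using p Ts_def by simp
  qed
  have "(THE y. \<exists>ys. (\<forall>q\<in>I. ys q \<in> Ts q) \<and> sum ys I = z \<and> ys (i, j) = y) = K (i, j) *v z"
  proof (rule the_equality)
    show "\<exists>ys. (\<forall>q\<in>I. ys q \<in> Ts q) \<and> sum ys I = z \<and> ys (i, j) = K (i, j) *v z"
      by (rule exI[of _ "\<lambda>p. K p *v z"])
         (use inT sumK[unfolded I_def] in \<open>auto simp: V.mat_sum_apply[symmetric] I_def\<close>)
  next
    fix y assume "\<exists>ys. (\<forall>q\<in>I. ys q \<in> Ts q) \<and> sum ys I = z \<and> ys (i, j) = y"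
    then obtain ys where ys: "\<forall>q\<in>I. ys q \<in> Ts q" "sum ys I = z" "ys (i, j) = y" by blast
    have ijI: "(i, j) \<in> I" using ij I_def by auto
    have "K (i, j) *v z = (\<Sum>q\<in>I. K (i, j) *v ys q)"
      using ys(2) vec.sum by metis
    also have "\<dots> = (\<Sum>q\<in>I. if (i, j) = q then ys q else 0)"
      using proj[OF ijI] ys(1) by (intro sum.cong refl) auto
    also have "\<dots> = y" using ijI ys(3) I_def by simp
    finally show "y = K (i, j) *v z" by simp
  qed
  thus ?thesis unfolding component_def I_def Ts_def K_def by simp
qed

lemma msc_apply: "msc c A *v x = c *s (A *v x)"
  by (simp add: vec_eq_iff msc_def matrix_vector_mult_def sum_distrib_left mult_ac)

lemma bracket_apply: "B *v (A *v x) = A *v (B *v x) - bracket A B *v x"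
  by (simp add: bracket_def matrix_vector_mul_assoc matrix_vector_mult_diff_rdistrib)

locale smod =
  fixes m :: nat and \<rho> :: "('a::field_char_0, 'n::finite) gmrep" and l :: nat
    and U :: "nat \<Rightarrow> ('a^'n) set"
  assumes gm: "gm_module m \<rho>" and us: "uniserial m \<rho>" and sd: "socle_decomp m \<rho> l U"
begin

lemma irr: "k \<le> l \<Longrightarrow> sl2_irred \<rho> (U k)"
  using sd unfolding socle_decomp_def by blast

lemma sl2_U: "k \<le> l \<Longrightarrow> sl2_submodule \<rho> (U k)"
  using irr unfolding sl2_irred_def by blast

lemma subU: "k \<le> l \<Longrightarrow> vec.subspace (U k)"
  using sl2_U unfolding sl2_submodule_def by blast

lemma soc_eq: "k \<le> l + 1 \<Longrightarrow> soc m \<rho> k = vec.span (\<Union>i<k. U i)"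
  using sd unfolding socle_decomp_def by blast

end

sublocale smod \<subseteq> dsum l U
  apply unfold_locales
  using subU apply blast
  using sd unfolding socle_decomp_def apply blast
  using sd unfolding socle_decomp_def apply blast
  done

context smod
begin

lemma soc_char: "k \<le> l + 1 \<Longrightarrow> soc m \<rho> k = {x. \<forall>j. k \<le> j \<and> j \<le> l \<longrightarrow> P j *v x = 0}"
  using soc_eq span_char by simp

lemma commE: "i \<le> l \<Longrightarrow> P i ** eop \<rho> = eop \<rho> ** P i"
  using sl2_U by (intro P_comm) (auto simp: sl2_submodule_def)
lemma commH: "i \<le> l \<Longrightarrow> P i ** hop \<rho> = hop \<rho> ** P i"
  using sl2_U by (intro P_comm) (auto simp: sl2_submodule_def)
lemma commF: "i \<le> l \<Longrightarrow> P i ** fop \<rho> = fop \<rho> ** P i"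
  using sl2_U by (intro P_comm) (auto simp: sl2_submodule_def)

lemma PA: "P i ** A = A ** P i \<Longrightarrow> P i *v (A *v x) = A *v (P i *v x)"
  by (simp add: matrix_vector_mul_assoc)

lemma brE: "s \<le> m \<Longrightarrow> bracket (eop \<rho>) (rop \<rho> s) =
               (if s = 0 then 0 else msc (of_nat (s * (m + 1 - s))) (rop \<rho> (s - 1)))"
  using gm unfolding gm_module_def by blast
lemma brH: "s \<le> m \<Longrightarrow> bracket (hop \<rho>) (rop \<rho> s) = msc (of_int (int m - 2 * int s)) (rop \<rho> s)"
  using gm unfolding gm_module_def by blast
lemma brF: "s \<le> m \<Longrightarrow> bracket (fop \<rho>) (rop \<rho> s) = (if s = m then 0 else rop \<rho> (s + 1))"
  using gm unfolding gm_module_def by blast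

declare soc.simps(2)[simp del]

lemma key:
  assumes i0: "1 \<le> i0" "i0 \<le> l" and x: "x \<in> U i0"
    and kill0: "\<forall>s\<le>m. P (i0 - 1) *v (rop \<rho> s *v x) = 0"
  shows "x = 0"
proof (rule ccontr)
  assume xnz: "x \<noteq> 0"
  define k where "k = i0 - 1"
  have kl: "k \<le> l" "k < i0" "Suc k = i0" using i0 k_def by auto
  define R where "R = rop \<rho>"
  define X where "X = {y \<in> U i0. \<forall>s\<le>m. P k *v (R s *v y) = 0}"
  have step: "\<forall>s\<le>m. P k *v (R s *v (A *v y)) = 0"
    if c: "P k ** A = A ** P k" and y: "y \<in> X"
      and b: "\<And>s. s \<le> m \<Longrightarrow> P k *v (bracket A (R s) *v y) = 0" for A y
  proof (intro allI impI)
    fix s assume s: "s \<le> m"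
    have "P k *v (R s *v (A *v y)) = A *v (P k *v (R s *v y)) - P k *v (bracket A (R s) *v y)"
      by (subst bracket_apply) (simp add: PA[OF c] vec.diff)
    thus "P k *v (R s *v (A *v y)) = 0" using y s b[OF s] X_def by simp
  qed
  have subX: "sl2_submodule \<rho> X"
    unfolding sl2_submodule_def
  proof (intro conjI ballI)
    show "vec.subspace X"
      using subU[OF i0(2)]
      by (auto simp: X_def vec.subspace_def vec.add vec.scale)
  next
    fix y assume y: "y \<in> X"
    hence yU: "y \<in> U i0" by (simp add: X_def)
    show "eop \<rho> *v y \<in> X"
    proof -
      have "\<forall>s\<le>m. P k *v (R s *v (eop \<rho> *v y)) = 0"
      proof (rule step[OF commE[OF kl(1)] y])
        fix s assume s: "s \<le> m"
        show "P k *v (bracket (eop \<rho>) (R s) *v y) = 0"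
          using brE[OF s] y s by (auto simp: R_def msc_apply vec.scale X_def)
      qed
      moreover have "eop \<rho> *v y \<in> U i0" using sl2_U[OF i0(2)] yU by (simp add: sl2_submodule_def)
      ultimately show ?thesis by (simp add: X_def)
    qed
    show "hop \<rho> *v y \<in> X"
    proof -
      have "\<forall>s\<le>m. P k *v (R s *v (hop \<rho> *v y)) = 0"
      proof (rule step[OF commH[OF kl(1)] y])
        fix s assume s: "s \<le> m"
        show "P k *v (bracket (hop \<rho>) (R s) *v y) = 0"
        proof -
          have "P k *v (rop \<rho> s *v y) = 0" using y s by (simp add: X_def R_def)
          thus ?thesis unfolding R_def brH[OF s] msc_apply vec.scale by simp
        qed
      qed
      moreover have "hop \<rho> *v y \<in> U i0" using sl2_U[OF i0(2)] yU by (simp add: sl2_submodule_def)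
      ultimately show ?thesis by (simp add: X_def)
    qed
    show "fop \<rho> *v y \<in> X"
    proof -
      have "\<forall>s\<le>m. P k *v (R s *v (fop \<rho> *v y)) = 0"
      proof (rule step[OF commF[OF kl(1)] y])
        fix s assume s: "s \<le> m"
        show "P k *v (bracket (fop \<rho>) (R s) *v y) = 0"
          using brF[OF s] y s by (auto simp: R_def X_def)
      qed
      moreover have "fop \<rho> *v y \<in> U i0" using sl2_U[OF i0(2)] yU by (simp add: sl2_submodule_def)
      ultimately show ?thesis by (simp add: X_def)
    qed
  qed
  have "X = {0} \<or> X = U i0"
    using irr[OF i0(2)] subX unfolding sl2_irred_def X_def by blast
  moreover have "x \<in> X" using x kill0 by (simp add: X_def k_def R_def)
  ultimately have XU: "X = U i0" using xnz by auto
  have kill: "P k *v (R s *v y) = 0" if "y \<in> U i0" "s \<le> m" for y s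
    using that XU unfolding X_def by blast
  have Px: "P i0 *v x = x" using P_U[OF i0(2) i0(2) x] by simp
  have S: "soc m \<rho> k = {y. \<forall>j. k \<le> j \<and> j \<le> l \<longrightarrow> P j *v y = 0}"
    using soc_char kl by simp
  have Si0: "soc m \<rho> i0 = {y. \<forall>j. i0 \<le> j \<and> j \<le> l \<longrightarrow> P j *v y = 0}"
    using soc_char i0 by simp
  have Si1: "soc m \<rho> (Suc i0) = {y. \<forall>j. Suc i0 \<le> j \<and> j \<le> l \<longrightarrow> P j *v y = 0}"
    using soc_char[of "Suc i0"] i0 by simp
  have "soc m \<rho> k \<noteq> UNIV"
  proof
    assume "soc m \<rho> k = UNIV"
    hence "x \<in> soc m \<rho> k" by simp
    hence "P i0 *v x = 0" using S kl i0 by auto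
    thus False using Px xnz by simp
  qed
  hence gmS: "gm_submodule m \<rho> (soc m \<rho> k)"
    using us unfolding uniserial_def simple_quot_def by blast
  have "soc m \<rho> i0 \<noteq> UNIV"
  proof
    assume "soc m \<rho> i0 = UNIV"
    hence "x \<in> soc m \<rho> i0" by simp
    hence "P i0 *v x = 0" using Si0 i0 by auto
    thus False using Px xnz by simp
  qed
  hence gmS1: "gm_submodule m \<rho> (soc m \<rho> (Suc i0))"
    using us unfolding uniserial_def simple_quot_def by blast
  define S where "S = soc m \<rho> k"
  define N' where "N' = {y. \<forall>j. k \<le> j \<and> j \<le> l \<and> j \<noteq> i0 \<longrightarrow> P j *v y = 0}"
  have y0S: "y - P i0 *v y \<in> S" if "y \<in> N'" for y
  proof -
    have "P j *v (y - P i0 *v y) = 0" if j: "k \<le> j" "j \<le> l" for j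
      using \<open>y \<in> N'\<close> j P_U[OF j(2) i0(2) P_in[OF i0(2)]] by (auto simp: vec.diff N'_def)
    thus ?thesis using S S_def by auto
  qed
  have U_S1: "U i0 \<subseteq> soc m \<rho> (Suc i0)"
  proof
    fix y assume y: "y \<in> U i0"
    have "P j *v y = 0" if "Suc i0 \<le> j" "j \<le> l" for j
      using P_U[OF that(2) i0(2) y] that by simp
    thus "y \<in> soc m \<rho> (Suc i0)" unfolding Si1 by auto
  qed
  have SN': "S \<subseteq> N'" using S S_def N'_def by auto
  have xN': "x \<in> N'" using P_U[OF _ i0(2) x] N'_def by auto
  have xS: "x \<notin> S"
  proof
    assume "x \<in> S"
    hence "P i0 *v x = 0" using S S_def kl i0 by auto
    thus False using Px xnz by simp
  qed
  have subN': "vec.subspace N'"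
    by (auto simp: N'_def vec.subspace_def vec.add vec.scale)
  have gmN': "gm_submodule m \<rho> N'"
    unfolding gm_submodule_def sl2_submodule_def
  proof (intro conjI ballI allI impI subN')
    fix y assume y: "y \<in> N'"
    show "eop \<rho> *v y \<in> N'" using y PA[OF commE] by (auto simp: N'_def)
    show "hop \<rho> *v y \<in> N'" using y PA[OF commH] by (auto simp: N'_def)
    show "fop \<rho> *v y \<in> N'" using y PA[OF commF] by (auto simp: N'_def)
    fix s assume s: "s \<le> m"
    have a: "rop \<rho> s *v (y - P i0 *v y) \<in> S"
      using gmS y0S[OF y] s unfolding gm_submodule_def S_def by blast
    have b: "rop \<rho> s *v (P i0 *v y) \<in> soc m \<rho> (Suc i0)"
      using gmS1 U_S1 P_in[OF i0(2)] s unfolding gm_submodule_def by blast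
    have eq: "rop \<rho> s *v y = rop \<rho> s *v (y - P i0 *v y) + rop \<rho> s *v (P i0 *v y)"
      by (simp add: vec.diff)
    show "rop \<rho> s *v y \<in> N'"
      unfolding N'_def
    proof (intro CollectI allI impI)
      fix j assume j: "k \<le> j \<and> j \<le> l \<and> j \<noteq> i0"
      have "P j *v (rop \<rho> s *v (y - P i0 *v y)) = 0" using a j S S_def by auto
      moreover have "P j *v (rop \<rho> s *v (P i0 *v y)) = 0"
      proof (cases "j = k")
        case True
        thus ?thesis using kill[OF P_in[OF i0(2)] s] R_def by simp
      next
        case False
        hence "Suc i0 \<le> j" using j kl by auto
        thus ?thesis using b Si1 j by auto
      qed
      ultimately show "P j *v (rop \<rho> s *v y) = 0" by (simp add: eq vec.add)
    qed
  qed
  have sq: "simple_quot m \<rho> S N'"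
    unfolding simple_quot_def
  proof (intro conjI allI impI)
    show "gm_submodule m \<rho> S" using gmS S_def by simp
    show "gm_submodule m \<rho> N'" by (rule gmN')
    show "S \<subset> N'" using SN' xN' xS by auto
    fix N assume N: "gm_submodule m \<rho> N \<and> S \<subseteq> N \<and> N \<subseteq> N'"
    have subN: "vec.subspace N" using N unfolding gm_submodule_def sl2_submodule_def by blast
    have "sl2_submodule \<rho> (N \<inter> U i0)"
      using N sl2_U[OF i0(2)] unfolding gm_submodule_def sl2_submodule_def
      by (auto intro: vec.subspace_inter)
    hence "N \<inter> U i0 = {0} \<or> N \<inter> U i0 = U i0"
      using irr[OF i0(2)] unfolding sl2_irred_def by blast
    thus "N = S \<or> N = N'"
    proof
      assume Y: "N \<inter> U i0 = {0}"
      have "N \<subseteq> S"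
      proof
        fix y assume yN: "y \<in> N"
        have y0: "y - P i0 *v y \<in> S" using y0S yN N by auto
        hence "y - P i0 *v y \<in> N" using N by auto
        hence "y - (y - P i0 *v y) \<in> N" using subN yN vec.subspace_diff by blast
        hence "P i0 *v y \<in> N \<inter> U i0" using P_in[OF i0(2)] by auto
        hence "P i0 *v y = 0" using Y by auto
        thus "y \<in> S" using y0 by simp
      qed
      thus ?thesis using N by auto
    next
      assume Y: "N \<inter> U i0 = U i0"
      have "N' \<subseteq> N"
      proof
        fix y assume yN': "y \<in> N'"
        have "y - P i0 *v y \<in> N" using y0S[OF yN'] N by auto
        moreover have "P i0 *v y \<in> N" using Y P_in[OF i0(2)] by blast
        ultimately have "(y - P i0 *v y) + P i0 *v y \<in> N" using subN vec.subspace_add by blast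
        thus "y \<in> N" by simp
      qed
      thus ?thesis using N by auto
    qed
  qed
  have "N' \<subseteq> soc m \<rho> (Suc k)"
    using sq unfolding soc.simps S_def by (auto intro: vec.span_base)
  hence "x \<in> soc m \<rho> i0" using xN' kl by auto
  thus False using Si0 Px xnz i0 by auto
qed

end

lemma (in smod) is_dsum: "dsum l U" by (rule dsum_axioms)

theorem lemma3p1:
  fixes m :: nat
    and \<rho> :: "('a::field_char_0, 'n::finite) gmrep"
    and \<sigma> :: "('a, 'k::finite) gmrep"
    and l l' :: nat
    and U :: "nat \<Rightarrow> ('a^'n) set"
    and U' :: "nat \<Rightarrow> ('a^'k) set"
    and i0 j0 :: nat
    and v0 :: "'a^('n \<times> 'k)"
  assumes "m \<ge> 1"
    and "gm_module m \<rho>" and "gm_module m \<sigma>"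
    and "uniserial m \<rho>" and "uniserial m \<sigma>"
    and "socle_decomp m \<rho> l U" and "socle_decomp m \<sigma> l' U'"
    and "l \<ge> 1" and "l' \<ge> 1"
    and "i0 \<le> l" and "j0 \<le> l'"
    and "v0 \<in> tsub (U i0) (U' j0)" and "v0 \<noteq> 0"
    and "\<exists>c. tact (hop \<rho>) (hop \<sigma>) *v v0 = c *s v0"
    and "tact (eop \<rho>) (eop \<sigma>) *v v0 = 0"
  shows "((\<forall>s\<le>m. (if i0 = 0 then 0 else
             component ({..l} \<times> {..l'}) (\<lambda>(i, j). tsub (U i) (U' j))
               (tact (rop \<rho> s) (rop \<sigma> s) *v v0) (i0 - 1, j0)) = 0) \<longleftrightarrow> i0 = 0) \<and>
         ((\<forall>s\<le>m. (if j0 = 0 then 0 else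
             component ({..l} \<times> {..l'}) (\<lambda>(i, j). tsub (U i) (U' j))
               (tact (rop \<rho> s) (rop \<sigma> s) *v v0) (i0, j0 - 1)) = 0) \<longleftrightarrow> j0 = 0)"
proof -
  interpret V: smod m \<rho> l U using assms by unfold_locales
  interpret W: smod m \<sigma> l' U' using assms by unfold_locales
  have v0: "v0 \<in> tsub (U i0) (U' j0)" "v0 \<noteq> 0" using assms by auto
  have i0l: "i0 \<le> l" and j0l: "j0 \<le> l'" using assms by auto
  have comp1: "component ({..l} \<times> {..l'}) (\<lambda>(i, j). tsub (U i) (U' j))
               (tact (rop \<rho> s) (rop \<sigma> s) *v v0) (i0 - 1, j0)
             = kron (V.P (i0 - 1) ** rop \<rho> s) (mat 1) *v v0" if "i0 \<noteq> 0" for s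
  proof -
    have "component ({..l} \<times> {..l'}) (\<lambda>(i, j). tsub (U i) (U' j))
               (tact (rop \<rho> s) (rop \<sigma> s) *v v0) (i0 - 1, j0)
        = (kron (V.P (i0 - 1)) (W.P j0) ** tact (rop \<rho> s) (rop \<sigma> s)) *v v0"
      using component_kron[OF V.is_dsum W.is_dsum, of "i0 - 1" j0] i0l j0l
      by (simp add: matrix_vector_mul_assoc)
    also have "\<dots> = kron (V.P (i0 - 1) ** rop \<rho> s) (mat 1) *v v0"
    proof (rule tsub_eq[OF v0(1)])
      fix u w assume u: "u \<in> U i0" and w: "w \<in> U' j0"
      have "V.P (i0 - 1) *v u = 0" using V.P_U[OF _ i0l u] i0l that by simp
      moreover have "W.P j0 *v w = w" using W.P_U[OF j0l j0l w] by simp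
      ultimately show "(kron (V.P (i0 - 1)) (W.P j0) ** tact (rop \<rho> s) (rop \<sigma> s)) *v tens u w
          = kron (V.P (i0 - 1) ** rop \<rho> s) (mat 1) *v tens u w"
        by (simp add: matrix_vector_mul_assoc[symmetric] tact_tens kron_tens vec.add)
    qed
    finally show ?thesis .
  qed
  have comp2: "component ({..l} \<times> {..l'}) (\<lambda>(i, j). tsub (U i) (U' j))
               (tact (rop \<rho> s) (rop \<sigma> s) *v v0) (i0, j0 - 1)
             = kron (mat 1) (W.P (j0 - 1) ** rop \<sigma> s) *v v0" if "j0 \<noteq> 0" for s
  proof -
    have "component ({..l} \<times> {..l'}) (\<lambda>(i, j). tsub (U i) (U' j))
               (tact (rop \<rho> s) (rop \<sigma> s) *v v0) (i0, j0 - 1)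
        = (kron (V.P i0) (W.P (j0 - 1)) ** tact (rop \<rho> s) (rop \<sigma> s)) *v v0"
      using component_kron[OF V.is_dsum W.is_dsum, of i0 "j0 - 1"] i0l j0l
      by (simp add: matrix_vector_mul_assoc)
    also have "\<dots> = kron (mat 1) (W.P (j0 - 1) ** rop \<sigma> s) *v v0"
    proof (rule tsub_eq[OF v0(1)])
      fix u w assume u: "u \<in> U i0" and w: "w \<in> U' j0"
      have "W.P (j0 - 1) *v w = 0" using W.P_U[OF _ j0l w] j0l that by simp
      moreover have "V.P i0 *v u = u" using V.P_U[OF i0l i0l u] by simp
      ultimately show "(kron (V.P i0) (W.P (j0 - 1)) ** tact (rop \<rho> s) (rop \<sigma> s)) *v tens u w
          = kron (mat 1) (W.P (j0 - 1) ** rop \<sigma> s) *v tens u w"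
        by (simp add: matrix_vector_mul_assoc[symmetric] tact_tens kron_tens vec.add)
    qed
    finally show ?thesis .
  qed
  have part1: "(\<forall>s\<le>m. (if i0 = 0 then 0 else
             component ({..l} \<times> {..l'}) (\<lambda>(i, j). tsub (U i) (U' j))
               (tact (rop \<rho> s) (rop \<sigma> s) *v v0) (i0 - 1, j0)) = 0) \<longleftrightarrow> i0 = 0"
  proof (cases "i0 = 0")
    case True thus ?thesis by simp
  next
    case False
    have "\<not> (\<forall>s\<le>m. kron (V.P (i0 - 1) ** rop \<rho> s) (mat 1) *v v0 = 0)"
    proof
      assume all: "\<forall>s\<le>m. kron (V.P (i0 - 1) ** rop \<rho> s) (mat 1) *v v0 = 0"
      obtain b where b: "slice1 b v0 \<noteq> 0" using slice1_nz[OF v0(2)] by blast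
      have xU: "slice1 b v0 \<in> U i0" using slice1_in[OF v0(1) V.subU[OF i0l]] .
      have "\<forall>s\<le>m. V.P (i0 - 1) *v (rop \<rho> s *v slice1 b v0) = 0"
        using all by (metis matrix_vector_mul_assoc slice1_kron slice_lin(3))
      hence "slice1 b v0 = 0" using V.key[OF _ i0l xU] False by simp
      thus False using b by simp
    qed
    thus ?thesis using False comp1[OF False] by simp
  qed
  have part2: "(\<forall>s\<le>m. (if j0 = 0 then 0 else
             component ({..l} \<times> {..l'}) (\<lambda>(i, j). tsub (U i) (U' j))
               (tact (rop \<rho> s) (rop \<sigma> s) *v v0) (i0, j0 - 1)) = 0) \<longleftrightarrow> j0 = 0"
  proof (cases "j0 = 0")
    case True thus ?thesis by simp
  next
    case False
    have "\<not> (\<forall>s\<le>m. kron (mat 1) (W.P (j0 - 1) ** rop \<sigma> s) *v v0 = 0)"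
    proof
      assume all: "\<forall>s\<le>m. kron (mat 1) (W.P (j0 - 1) ** rop \<sigma> s) *v v0 = 0"
      obtain a where a: "slice2 a v0 \<noteq> 0" using slice2_nz[OF v0(2)] by blast
      have xU: "slice2 a v0 \<in> U' j0" using slice2_in[OF v0(1) W.subU[OF j0l]] .
      have "\<forall>s\<le>m. W.P (j0 - 1) *v (rop \<sigma> s *v slice2 a v0) = 0"
        using all by (metis matrix_vector_mul_assoc slice2_kron slice_lin(6))
      hence "slice2 a v0 = 0" using W.key[OF _ j0l xU] False by simp
      thus False using a by simp
    qed
    thus ?thesis using False comp2[OF False] by simp
  qed
  show ?thesis using part1 part2 by blast
qed

end
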